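(* Let $(X,d)$ be a separable metric space, $f:X\to X$ a Borel measurable map, and $A\subset X$ a Borel set such that $f$ is Lyapunov stable on $A$. Then $\mu(A)=0$ for every Borel probability measure $\mu$ that is an expansive measure of $f$.
   Context: $f$ is Lyapunov stable on $A$ if for every $x\in A$ and every $\epsilon>0$ there is a neighborhood $U(x)$ of $x$ such that $d(f^n(x),f^n(y))<\epsilon$ for all $n\ge0$ and all $y\in U(x)\cap A$. A Borel probability measure $\mu$ (not necessarily invariant) is an expansive measure of $f$ if there is $\delta>0$ with $\mu(\Phi_\delta(x))=0$ for all $x\in X$, where $\Phi_\delta(x)=\{y\in X: d(f^i(y),f^i(x))\le\delta \text{ for all } i\in\mathbb{N}\}$, $\mathbb{N}=\{0,1,2,\dots\}$. *)

theory Defs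
  imports "HOL-Analysis.Analysis" "HOL-Probability.Probability"
begin

definition lyapunov_stable_on :: "('a::metric_space \<Rightarrow> 'a) \<Rightarrow> 'a set \<Rightarrow> bool" where
  "lyapunov_stable_on f A \<longleftrightarrow>
     (\<forall>x\<in>A. \<forall>\<epsilon>>0. \<exists>U. open U \<and> x \<in> U \<and>
        (\<forall>n. \<forall>y\<in>U \<inter> A. dist ((f ^^ n) x) ((f ^^ n) y) < \<epsilon>))"

definition dyn_ball :: "('a::metric_space \<Rightarrow> 'a) \<Rightarrow> real \<Rightarrow> 'a \<Rightarrow> 'a set" where
  "dyn_ball f \<delta> x = {y. \<forall>i::nat. dist ((f ^^ i) y) ((f ^^ i) x) \<le> \<delta>}"

definition expansive_measure :: "('a::metric_space \<Rightarrow> 'a) \<Rightarrow> 'a measure \<Rightarrow> bool" where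
  "expansive_measure f \<mu> \<longleftrightarrow> (\<exists>\<delta>>0. \<forall>x. emeasure \<mu> (dyn_ball f \<delta> x) = 0)"

end

theory Submission
  imports Defs
begin

lemma funpow_meas:
  assumes "f \<in> borel_measurable (borel :: 'a::metric_space measure)"
  shows "(f ^^ n) \<in> borel \<rightarrow>\<^sub>M (borel :: 'a measure)"
proof (induction n)
  case 0 then show ?case by simp
next
  case (Suc n)
  have "(f ^^ Suc n) = f \<circ> (f ^^ n)" by simp
  then show ?case using Suc assms measurable_comp by metis
qed

lemma dyn_ball_meas:
  assumes "f \<in> borel_measurable (borel :: 'a::metric_space measure)"
  shows "dyn_ball f \<delta> x \<in> sets borel"
proof -
  have "dyn_ball f \<delta> x = (\<Inter>i. {y. dist ((f ^^ i) y) ((f ^^ i) x) \<le> \<delta>})"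
    unfolding dyn_ball_def by auto
  moreover have "{y. dist ((f ^^ i) y) ((f ^^ i) x) \<le> \<delta>} \<in> sets borel" for i
  proof -
    have m: "(f ^^ i) \<in> borel \<rightarrow>\<^sub>M (borel :: 'a measure)" using funpow_meas[OF assms] .
    have "(\<lambda>y. dist ((f ^^ i) y) ((f ^^ i) x)) \<in> borel_measurable borel"
    proof -
      have c: "(\<lambda>z. dist z ((f ^^ i) x)) \<in> borel_measurable borel"
        by (intro borel_measurable_continuous_onI continuous_intros)
      show ?thesis using measurable_compose[OF m c] by (simp add: comp_def)
    qed
    then show ?thesis by measurable
  qed
  ultimately show ?thesis by auto
qed

theorem proposition3p4:
  fixes f :: "'a::metric_space \<Rightarrow> 'a" and A :: "'a set"
  assumes "separable_space (euclidean :: 'a topology)"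
    and "f \<in> borel_measurable borel"
    and "A \<in> sets borel"
    and "lyapunov_stable_on f A"
  shows "\<forall>\<mu>::'a measure. sets \<mu> = sets borel \<and> prob_space \<mu> \<and> expansive_measure f \<mu>
           \<longrightarrow> emeasure \<mu> A = 0"
proof (intro allI impI)
  fix \<mu> :: "'a measure"
  assume H: "sets \<mu> = sets borel \<and> prob_space \<mu> \<and> expansive_measure f \<mu>"
  then obtain \<delta> where dpos: "\<delta> > 0" and d0: "\<And>x. emeasure \<mu> (dyn_ball f \<delta> x) = 0"
    unfolding expansive_measure_def by auto
  have sm: "sets \<mu> = sets borel" using H by auto
  obtain C :: "'a set" where Cc: "countable C" and Cd0: "euclidean closure_of C = topspace euclidean"
    using assms(1) unfolding separable_space_def by blast
  have Cd: "closure C = UNIV" using Cd0 by (simp only: euclidean_closure_of topspace_euclidean)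
  define G where "G = {p. fst p \<in> C \<and> snd p \<in> (\<rat> :: real set) \<and> (\<exists>x\<in>A. ball (fst p) (snd p) \<inter> A \<subseteq> dyn_ball f \<delta> x)}"
  have Gc: "countable G"
  proof -
    have "G \<subseteq> C \<times> \<rat>" unfolding G_def by (auto simp: mem_Times_iff)
    moreover have "countable (C \<times> (\<rat>::real set))" using Cc countable_rat by auto
    ultimately show ?thesis using countable_subset by blast
  qed
  have cover: "A \<subseteq> (\<Union>p\<in>G. ball (fst p) (snd p) \<inter> A)"
  proof
    fix x assume xA: "x \<in> A"
    obtain U where U: "open U" "x \<in> U" "\<And>n y. y \<in> U \<inter> A \<Longrightarrow> dist ((f ^^ n) x) ((f ^^ n) y) < \<delta>"
    proof -
      have "\<forall>\<epsilon>>0. \<exists>U. open U \<and> x \<in> U \<and>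
        (\<forall>n. \<forall>y\<in>U \<inter> A. dist ((f ^^ n) x) ((f ^^ n) y) < \<epsilon>)"
        using assms(4) xA unfolding lyapunov_stable_on_def by blast
      then obtain U where "open U" "x \<in> U" "\<forall>n. \<forall>y\<in>U \<inter> A. dist ((f ^^ n) x) ((f ^^ n) y) < \<delta>"
        using dpos by blast
      then show ?thesis using that by blast
    qed
    obtain r where r: "r > 0" "ball x r \<subseteq> U" using U(1,2) open_contains_ball by blast
    have "x \<in> closure C" using Cd by auto
    then obtain d where dC: "d \<in> C" and dd: "dist d x < r/2"
      using closure_approachable[of x C] half_gt_zero[OF r(1)] by blast
    have dd': "dist x d < r/2" using dd by (simp add: dist_commute)
    obtain q where q: "q \<in> \<rat>" "dist x d < q" "q < r/2"
      using Rats_dense_in_real[OF dd'] by blast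
    have sub: "ball d q \<inter> A \<subseteq> dyn_ball f \<delta> x"
    proof
      fix y assume y: "y \<in> ball d q \<inter> A"
      have dy: "dist d y < q" using y by simp
      have "dist x y \<le> dist x d + dist d y" by (rule dist_triangle)
      then have "dist x y < r" using dy q(2,3) by linarith
      then have "y \<in> ball x r" by simp
      then have "y \<in> U \<inter> A" using r(2) y by blast
      then have yUA: "y \<in> U \<inter> A" .
      have "\<forall>i. dist ((f ^^ i) y) ((f ^^ i) x) \<le> \<delta>"
      proof (intro allI)
        fix i
        have "dist ((f ^^ i) x) ((f ^^ i) y) < \<delta>" using U(3) \<open>y \<in> U \<inter> A\<close> by blast
        then show "dist ((f ^^ i) y) ((f ^^ i) x) \<le> \<delta>" by (metis dist_commute less_imp_le)
      qed
      then show "y \<in> dyn_ball f \<delta> x" unfolding dyn_ball_def by blast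
    qed
    have "(d, q) \<in> G" unfolding G_def using dC q(1) sub xA by auto
    moreover have "x \<in> ball d q \<inter> A" using q xA by (auto simp: dist_commute)
    ultimately show "x \<in> (\<Union>p\<in>G. ball (fst p) (snd p) \<inter> A)" by (intro UN_I[of "(d, q)"]) simp_all
  qed
  have null: "ball (fst p) (snd p) \<inter> A \<in> null_sets \<mu>" if "p \<in> G" for p
  proof -
    have "\<exists>x\<in>A. ball (fst p) (snd p) \<inter> A \<subseteq> dyn_ball f \<delta> x"
      using that unfolding G_def by (auto simp only: mem_Collect_eq)
    then obtain x where sub: "ball (fst p) (snd p) \<inter> A \<subseteq> dyn_ball f \<delta> x" by blast
    have dm: "dyn_ball f \<delta> x \<in> sets \<mu>" using dyn_ball_meas[OF assms(2)] sm by simp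
    have dn: "dyn_ball f \<delta> x \<in> null_sets \<mu>" by (rule null_setsI[OF d0 dm])
    have "ball (fst p) (snd p) \<in> sets borel" by (rule borel_open) simp
    then have bm: "ball (fst p) (snd p) \<inter> A \<in> sets \<mu>" using sm assms(3) by simp
    show ?thesis by (rule null_sets_subset[OF dn bm sub])
  qed
  have un: "(\<Union>p\<in>G. ball (fst p) (snd p) \<inter> A) \<in> null_sets \<mu>"
    by (rule null_sets_UN'[OF Gc null])
  have Am: "A \<in> sets \<mu>" using sm assms(3) by simp
  have "A \<in> null_sets \<mu>" by (rule null_sets_subset[OF un Am cover])
  then show "emeasure \<mu> A = 0" by auto
qed

end
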